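(* Let $x\ge2$, let $k=k(x)\ge2$, and let $m$ be a uniformly random integer in $[1,x]$. Then \[ \mathbb{P}\big(\exists\text{ prime }p>k:\ v_p(m)=1\big)=1-O\Big(\frac{\log k}{\log x}+\frac1k\Big), \] with an absolute implied constant.
   Context: $v_p$ denotes the $p$-adic valuation on the integers. *)

theory Defs
  imports Complex_Main "HOL-Computational_Algebra.Primes"
begin

definition prob_large_simple_prime :: "real \<Rightarrow> real \<Rightarrow> real" where
  "prob_large_simple_prime x k =
     real (card {m \<in> {1..nat \<lfloor>x\<rfloor>}. \<exists>p::nat. prime p \<and> real p > k \<and> multiplicity p m = 1})
     / real (card {1..nat \<lfloor>x\<rfloor>})"

end

theory Submission imports Defs "HOL-Number_Theory.Prime_Powers" "HOL-Analysis.Summation_Tests"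
begin

lemma card_multiples:
  assumes "d > (0::nat)"
  shows "card {m\<in>{1..n}. d dvd m} = n div d"
proof -
  have "{m\<in>{1..n}. d dvd m} = (\<lambda>j. d*j) ` {1..n div d}"
  proof (intro set_eqI iffI)
    fix m assume "m \<in> {m\<in>{1..n}. d dvd m}"
    then obtain j where j: "m = d*j" "1 \<le> m" "m \<le> n" by auto
    then have "j \<ge> 1" by (cases j) auto
    moreover have "j \<le> n div d" using j assms
      by (metis div_le_mono nonzero_mult_div_cancel_left not_gr0)
    ultimately show "m \<in> (\<lambda>j. d*j) ` {1..n div d}" using j by auto
  next
    fix m assume "m \<in> (\<lambda>j. d*j) ` {1..n div d}"
    then obtain j where j: "m = d*j" "1 \<le> j" "j \<le> n div d" by (metis imageE atLeastAtMost_iff)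
    have "d*j \<le> d*(n div d)" using j by simp
    also have "\<dots> \<le> n" by simp
    finally show "m \<in> {m\<in>{1..n}. d dvd m}" using j assms by auto
  qed
  moreover have "inj_on (\<lambda>j. d*j) {1..n div d}" using assms by (auto simp: inj_on_def)
  ultimately show ?thesis by (simp add: card_image)
qed

lemma divisor_swap:
  fixes f :: "nat \<Rightarrow> real"
  shows "(\<Sum>m\<in>{1..n}. \<Sum>d | d dvd m. f d) = (\<Sum>d\<in>{1..n}. f d * real (n div d))"
proof -
  have "(\<Sum>m\<in>{1..n}. \<Sum>d | d dvd m. f d) = (\<Sum>m\<in>{1..n}. \<Sum>d\<in>{1..n}. if d dvd m then f d else 0)"
  proof (rule sum.cong[OF refl])
    fix m assume m: "m \<in> {1..n}"
    have "(\<Sum>d\<in>{1..n}. if d dvd m then f d else 0) = (\<Sum>d\<in>{d\<in>{1..n}. d dvd m}. f d)"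
      by (rule sum.inter_filter[symmetric]) simp
    also have "{d\<in>{1..n}. d dvd m} = {d. d dvd m}" using m
      by (auto dest: dvd_imp_le intro: Nat.gr0I)
    finally show "(\<Sum>d | d dvd m. f d) = (\<Sum>d\<in>{1..n}. if d dvd m then f d else 0)" by simp
  qed
  also have "\<dots> = (\<Sum>d\<in>{1..n}. \<Sum>m\<in>{1..n}. if d dvd m then f d else 0)"
    by (rule sum.swap)
  also have "\<dots> = (\<Sum>d\<in>{1..n}. f d * real (n div d))"
  proof (rule sum.cong[OF refl])
    fix d assume d: "d \<in> {1..n}"
    have "(\<Sum>m\<in>{1..n}. if d dvd m then f d else 0) = (\<Sum>m\<in>{m\<in>{1..n}. d dvd m}. f d)"
      by (rule sum.inter_filter[symmetric]) simp
    also have "\<dots> = f d * real (n div d)" using d card_multiples[of d n] by simp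
    finally show "(\<Sum>m\<in>{1..n}. if d dvd m then f d else 0) = f d * real (n div d)" .
  qed
  finally show ?thesis .
qed

lemma div_lower: "real n / real d - 1 \<le> real (n div d)"
proof (cases "d = 0")
  case False
  have "n = d * (n div d) + n mod d" by simp
  hence "real n = real d * real (n div d) + real (n mod d)" by (metis of_nat_add of_nat_mult)
  moreover have "real (n mod d) < real d" using False by simp
  ultimately have "real n < real d * (real (n div d) + 1)" by (simp add: algebra_simps)
  thus ?thesis using False by (simp add: field_simps)
qed simp

lemma div_upper: "real (n div d) \<le> real n / real d"
proof (cases "d = 0")
  case False
  have "n = d * (n div d) + n mod d" by simp
  hence "real n = real d * real (n div d) + real (n mod d)" by (metis of_nat_add of_nat_mult)
  hence "real d * real (n div d) \<le> real n" by simp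
  thus ?thesis using False by (simp add: field_simps)
qed simp

lemma sum_ln_eq: "(\<Sum>m\<in>{1..n}. ln (real m)) = (\<Sum>d\<in>{1..n}. mangoldt d * real (n div d))"
proof -
  have "(\<Sum>m\<in>{1..n}. ln (real m)) = (\<Sum>m\<in>{1..n}. \<Sum>d | d dvd m. (mangoldt d :: real))"
    by (intro sum.cong refl) (simp add: mangoldt_sum)
  also have "\<dots> = (\<Sum>d\<in>{1..n}. mangoldt d * real (n div d))" by (rule divisor_swap)
  finally show ?thesis .
qed

lemma mertens_weak:
  assumes "n \<ge> 1"
  shows "(\<Sum>d\<in>{1..n}. if prime d then ln (real d) / real d else 0) \<le> 2 * ln (real n)"
proof -
  define S where "S = (\<Sum>d\<in>{1..n}. if prime d then ln (real d) / real d else 0)"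
  have "(\<Sum>d\<in>{1..n}. (if prime d then ln (real d) else 0) * (real n / real d - 1))
        \<le> (\<Sum>d\<in>{1..n}. mangoldt d * real (n div d))"
  proof (rule sum_mono)
    fix d assume d: "d \<in> {1..n}"
    show "(if prime d then ln (real d) else 0) * (real n / real d - 1) \<le> mangoldt d * real (n div d)"
    proof (cases "prime d")
      case True
      have "ln (real d) \<ge> 0" using d by simp
      thus ?thesis using True div_lower[of n d] by (simp add: mult_left_mono)
    next
      case False
      thus ?thesis by (simp add: mangoldt_nonneg)
    qed
  qed
  also have "\<dots> = (\<Sum>m\<in>{1..n}. ln (real m))" by (rule sum_ln_eq[symmetric])
  also have "\<dots> \<le> (\<Sum>m\<in>{1..n}. ln (real n))" by (intro sum_mono) auto
  also have "\<dots> = real n * ln (real n)" by simp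
  finally have A: "(\<Sum>d\<in>{1..n}. (if prime d then ln (real d) else 0) * (real n / real d - 1))
       \<le> real n * ln (real n)" .
  have "(\<Sum>d\<in>{1..n}. (if prime d then ln (real d) else 0) * (real n / real d - 1))
     = real n * S - (\<Sum>d\<in>{1..n}. (if prime d then ln (real d) else 0))"
  proof -
    have "(\<Sum>d\<in>{1..n}. (if prime d then ln (real d) else 0) * (real n / real d - 1))
      = (\<Sum>d\<in>{1..n}. real n * (if prime d then ln (real d) / real d else 0) - (if prime d then ln (real d) else 0))"
      by (intro sum.cong refl) (simp add: algebra_simps)
    also have "\<dots> = real n * S - (\<Sum>d\<in>{1..n}. (if prime d then ln (real d) else 0))"
      unfolding S_def by (simp add: sum_subtractf sum_distrib_left)
    finally show ?thesis .
  qed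
  moreover have "(\<Sum>d\<in>{1..n}. (if prime d then ln (real d) else 0)) \<le> (\<Sum>d\<in>{1..n}. ln (real n))"
    by (intro sum_mono) auto
  ultimately have "real n * S \<le> real n * (2 * ln (real n))" using A by simp
  thus ?thesis unfolding S_def using assms by simp
qed

lemma geom2:
  fixes q :: real
  assumes q: "2 \<le> q"
  shows "(\<Sum>a=2..N. (1/q)^a) \<le> 2/q^2"
proof -
  define r where "r = 1/q"
  have r0: "0 \<le> r" and r1: "r \<le> 1/2" using q by (auto simp: r_def field_simps)
  have "(\<Sum>a=2..N. r^a) \<le> r^2 / (1 - r)"
  proof (cases "N < 2")
    case True thus ?thesis using r0 r1 by simp
  next
    case False
    hence "(\<Sum>a=2..N. r^a) = (r^2 - r^Suc N) / (1 - r)" using r1 by (subst sum_gp) auto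
    also have "\<dots> \<le> r^2 / (1 - r)" using r0 r1 by (intro divide_right_mono) auto
    finally show ?thesis .
  qed
  also have "\<dots> \<le> 2 * r^2"
  proof -
    have "1/(1-r) \<le> 2" using r0 r1 by (simp add: field_simps)
    thus ?thesis using mult_left_mono[of "1/(1-r)" 2 "r^2"] by simp
  qed
  also have "\<dots> = 2/q^2" by (simp add: r_def power_divide)
  finally show ?thesis by (simp add: r_def)
qed

lemma ln_le_2sqrt: "n \<ge> 1 \<Longrightarrow> ln (real n) \<le> 2 * sqrt (real n)"
proof -
  assume n: "n \<ge> 1"
  have "ln (real n) = 2 * ln (sqrt (real n))" using n by (simp add: ln_sqrt)
  also have "\<dots> \<le> 2 * (sqrt (real n) - 1)" using n by (intro mult_left_mono ln_le_minus_one) auto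
  finally show ?thesis by simp
qed

lemma ln_over_sq: "n \<ge> 1 \<Longrightarrow> ln (real n) / real n ^ 2 \<le> 2 * real n powr (-3/2)"
proof -
  assume n: "n \<ge> 1"
  have "real n powr (-3/2) * real n ^ 2 = sqrt (real n)"
  proof -
    have "real n powr (-3/2) * real n ^ 2 = real n powr (-3/2) * real n powr 2"
      using n by (simp add: powr_numeral)
    also have "\<dots> = real n powr (1/2)" using n by (subst powr_add[symmetric]) simp
    also have "\<dots> = sqrt (real n)" using n by (simp add: powr_half_sqrt)
    finally show ?thesis .
  qed
  hence "2 * real n powr (-3/2) = 2 * sqrt (real n) / real n ^ 2" using n by (simp add: field_simps)
  moreover have "ln (real n) / real n ^ 2 \<le> 2 * sqrt (real n) / real n ^ 2"
    using ln_le_2sqrt[OF n] n by (intro divide_right_mono) auto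
  ultimately show ?thesis by simp
qed

definition Hf :: "nat \<Rightarrow> real" where
  "Hf d = (if primepow d \<and> \<not> prime d then ln (real (aprimedivisor d)) else 0)"

lemma Hf_nonneg: "Hf d \<ge> 0"
proof -
  { assume "primepow d"
    hence "d > 1" by (simp add: primepow_gt_Suc_0)
    hence "aprimedivisor d > Suc 0" by simp
    hence "aprimedivisor d \<ge> 1" by simp
    hence "ln (real (aprimedivisor d)) \<ge> 0" by simp }
  thus ?thesis by (auto simp: Hf_def)
qed

lemma Hf_pow: "prime p \<Longrightarrow> a \<ge> 2 \<Longrightarrow> Hf (p^a) = ln (real p)"
  by (simp add: Hf_def prime_power_iff aprimedivisor_prime_power)

definition CH :: real where "CH = 4 * (\<Sum>n. real n powr (-3/2))"

lemma Hf_sum: "(\<Sum>d\<in>{1..N}. Hf d / real d) \<le> CH"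
proof -
  define \<phi> where "\<phi> d = Hf d / real d" for d
  have \<phi>0: "\<phi> d \<ge> 0" for d unfolding \<phi>_def using Hf_nonneg by simp
  define I where "I = {p\<in>{1..N}. prime p} \<times> {2..N}"
  define g where "g = (\<lambda>(p::nat,a::nat). p^a)"
  have finI: "finite I" unfolding I_def by simp
  have sub: "d \<in> g ` I" if d: "d \<in> {1..N}" "\<phi> d \<noteq> 0" for d
  proof -
    have "primepow d" "\<not> prime d" using d(2) by (auto simp: \<phi>_def Hf_def split: if_splits)
    then obtain p a where pa: "prime p" "a > 0" "d = p^a" by (auto simp: primepow_def)
    have "a \<noteq> 1" using pa \<open>\<not> prime d\<close> by auto
    hence a2: "a \<ge> 2" using pa by simp
    have p2: "p \<ge> 2" using pa prime_ge_2_nat by blast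
    have "p \<le> p^a" using pa p2 by (simp add: self_le_power)
    hence "p \<le> N" using d pa by simp
    have "a < 2^a" by (rule less_exp)
    also have "\<dots> \<le> p^a" using p2 by (simp add: power_mono)
    finally have "a \<le> N" using d pa by simp
    show ?thesis unfolding I_def g_def using pa a2 \<open>p \<le> N\<close> \<open>a \<le> N\<close> p2
      by (auto intro!: image_eqI[of _ _ "(p,a)"])
  qed
  have "(\<Sum>d\<in>{1..N}. \<phi> d) = (\<Sum>d\<in>{1..N} \<inter> g ` I. \<phi> d)"
    by (rule sum.mono_neutral_right) (use sub in auto)
  also have "\<dots> \<le> (\<Sum>d\<in>g ` I. \<phi> d)"
    by (rule sum_mono2) (use finI \<phi>0 in auto)
  also have "\<dots> \<le> (\<Sum>x\<in>I. (\<phi> \<circ> g) x)"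
    by (rule sum_image_le) (use finI \<phi>0 in auto)
  also have "\<dots> = (\<Sum>(p,a)\<in>I. ln (real p) * (1 / real p)^a)"
    by (intro sum.cong refl) (auto simp: I_def g_def \<phi>_def Hf_pow power_divide)
  also have "\<dots> = (\<Sum>p\<in>{p\<in>{1..N}. prime p}. ln (real p) * (\<Sum>a=2..N. (1 / real p)^a))"
    unfolding I_def by (simp add: sum.cartesian_product[symmetric] sum_distrib_left)
  also have "\<dots> \<le> (\<Sum>p\<in>{p\<in>{1..N}. prime p}. ln (real p) * (2 / real p ^ 2))"
  proof (rule sum_mono)
    fix p assume p: "p \<in> {p\<in>{1..N}. prime p}"
    hence "real p \<ge> 2" using prime_ge_2_nat by force
    moreover have "ln (real p) \<ge> 0" using p by simp
    ultimately show "ln (real p) * (\<Sum>a=2..N. (1 / real p)^a) \<le> ln (real p) * (2 / real p ^ 2)"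
      by (intro mult_left_mono geom2) auto
  qed
  also have "\<dots> \<le> (\<Sum>n\<in>{1..N}. 4 * real n powr (-3/2))"
  proof -
    have "(\<Sum>p\<in>{p\<in>{1..N}. prime p}. ln (real p) * (2 / real p ^ 2))
        \<le> (\<Sum>p\<in>{1..N}. ln (real p) * (2 / real p ^ 2))"
      by (rule sum_mono2) auto
    also have "\<dots> \<le> (\<Sum>n\<in>{1..N}. 4 * real n powr (-3/2))"
    proof (rule sum_mono)
      fix n assume "n \<in> {1..N}"
      hence "ln (real n) / real n ^ 2 \<le> 2 * real n powr (-3/2)" by (intro ln_over_sq) auto
      moreover have "ln (real n) * (2 / real n ^ 2) = 2 * (ln (real n) / real n ^ 2)" by simp
      ultimately show "ln (real n) * (2 / real n ^ 2) \<le> 4 * real n powr (-3/2)" by linarith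
    qed
    finally show ?thesis .
  qed
  also have "\<dots> = 4 * (\<Sum>n\<in>{1..N}. real n powr (-3/2))" by (simp add: sum_distrib_left)
  also have "\<dots> \<le> CH" unfolding CH_def
    by (intro mult_left_mono sum_le_suminf) (auto simp: summable_real_powr_iff)
  finally show ?thesis unfolding \<phi>_def .
qed

definition Ps :: "real \<Rightarrow> nat \<Rightarrow> real" where
  "Ps k d = (if prime d \<and> real d \<le> k then ln (real d) else 0)"
definition Pl :: "real \<Rightarrow> nat \<Rightarrow> real" where
  "Pl k d = (if prime d \<and> real d > k then ln (real d) else 0)"

lemma mangoldt_split: "(mangoldt d :: real) = Ps k d + Pl k d + Hf d"
proof (cases "prime d")
  case True
  thus ?thesis by (auto simp: Ps_def Pl_def Hf_def)
next
  case False
  thus ?thesis by (simp add: Ps_def Pl_def Hf_def mangoldt_def)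
qed

lemma Ps_nonneg: "Ps k d \<ge> 0"
  by (auto simp: Ps_def dest: prime_gt_0_nat)

lemma pointwise:
  assumes m: "m \<ge> 1"
      and B: "\<forall>p. prime p \<and> real p > k \<longrightarrow> multiplicity p m \<noteq> 1"
  shows "ln (real m) \<le> (\<Sum>d | d dvd m. Ps k d + 2 * Hf d)"
proof -
  have fin: "finite {d. d dvd m}" using m by simp
  have "ln (real m) = (\<Sum>d | d dvd m. (mangoldt d :: real))" using m by (simp add: mangoldt_sum)
  also have "\<dots> = (\<Sum>d | d dvd m. Ps k d) + (\<Sum>d | d dvd m. Pl k d) + (\<Sum>d | d dvd m. Hf d)"
    by (simp add: mangoldt_split[of _ k] sum.distrib)
  also have "(\<Sum>d | d dvd m. Pl k d) \<le> (\<Sum>d | d dvd m. Hf d)"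
  proof -
    define P where "P = {d. d dvd m \<and> prime d \<and> real d > k}"
    have finP: "finite P" unfolding P_def using fin by (rule rev_finite_subset) auto
    have "(\<Sum>d | d dvd m. Pl k d) = (\<Sum>d\<in>P. Pl k d)"
      by (rule sum.mono_neutral_right[OF fin]) (auto simp: P_def Pl_def)
    also have "\<dots> = (\<Sum>d\<in>P. Hf (d^2))"
      by (intro sum.cong refl) (auto simp: P_def Pl_def Hf_pow)
    also have "\<dots> = (\<Sum>e\<in>(\<lambda>d. d^2) ` P. Hf e)"
      by (rule sum.reindex[symmetric, unfolded o_def]) (auto simp: inj_on_def power2_eq_iff)
    also have "\<dots> \<le> (\<Sum>d | d dvd m. Hf d)"
    proof (rule sum_mono2[OF fin])
      show "(\<lambda>d. d^2) ` P \<subseteq> {d. d dvd m}"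
      proof
        fix e assume "e \<in> (\<lambda>d. d^2) ` P"
        then obtain d where d: "e = d^2" "d dvd m" "prime d" "real d > k" by (auto simp: P_def)
        have "multiplicity d m > 0" using d m by (simp add: prime_multiplicity_gt_zero_iff)
        moreover have "multiplicity d m \<noteq> 1" using B d by auto
        ultimately have "2 \<le> multiplicity d m" by simp
        hence "d^2 dvd m" by (rule multiplicity_dvd')
        thus "e \<in> {d. d dvd m}" using d by simp
      qed
    qed (auto simp: Hf_nonneg)
    finally show ?thesis .
  qed
  hence "(\<Sum>d | d dvd m. Ps k d) + (\<Sum>d | d dvd m. Pl k d) + (\<Sum>d | d dvd m. Hf d)
       \<le> (\<Sum>d | d dvd m. Ps k d) + 2 * (\<Sum>d | d dvd m. Hf d)" by simp
  also have "\<dots> = (\<Sum>d | d dvd m. Ps k d + 2 * Hf d)" by (simp add: sum.distrib sum_distrib_left)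
  finally show ?thesis .
qed

lemma CH_nonneg: "CH \<ge> 0"
  unfolding CH_def by (intro mult_nonneg_nonneg suminf_nonneg) (auto simp: summable_real_powr_iff)

lemma Ps_sum:
  assumes k: "k \<ge> 2"
  shows "(\<Sum>d\<in>{1..N}. Ps k d / real d) \<le> 2 * ln k"
proof -
  define K where "K = nat \<lfloor>k\<rfloor>"
  define q where "q d = (if prime d then ln (real d) / real d else 0)" for d :: nat
  have q0: "q d \<ge> 0" for d by (auto simp: q_def dest: prime_gt_0_nat)
  have iff: "real d \<le> k \<longleftrightarrow> d \<le> K" for d
    unfolding K_def using k by (simp add: le_nat_iff le_floor_iff)
  have K1: "K \<ge> 1" using iff[of 1] k by simp
  have "(\<Sum>d\<in>{1..N}. Ps k d / real d) = (\<Sum>d\<in>{1..N}. if d \<in> {1..K} then q d else 0)"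
    by (intro sum.cong refl) (auto simp: Ps_def q_def iff)
  also have "\<dots> = (\<Sum>d\<in>{1..N} \<inter> {1..K}. q d)" by (rule sum.inter_restrict[symmetric]) simp
  also have "\<dots> \<le> (\<Sum>d\<in>{1..K}. q d)" by (rule sum_mono2) (auto simp: q0)
  also have "\<dots> \<le> 2 * ln (real K)" unfolding q_def by (rule mertens_weak[OF K1])
  also have "\<dots> \<le> 2 * ln k" using iff[of K] K1 by simp
  finally show ?thesis .
qed

lemma bad_logsum:
  fixes N :: nat and k :: real
  assumes k: "k \<ge> 2"
  defines "B \<equiv> {m\<in>{1..N}. \<not> (\<exists>p::nat. prime p \<and> real p > k \<and> multiplicity p m = 1)}"
  shows "(\<Sum>m\<in>B. ln (real m)) \<le> real N * (2 * ln k + 2 * CH)"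
proof -
  define F where "F d = Ps k d + 2 * Hf d" for d
  have F0: "F d \<ge> 0" for d unfolding F_def using Ps_nonneg Hf_nonneg by (simp add: add_nonneg_nonneg)
  have "(\<Sum>m\<in>B. ln (real m)) \<le> (\<Sum>m\<in>B. \<Sum>d | d dvd m. F d)"
    unfolding F_def by (intro sum_mono pointwise) (auto simp: B_def)
  also have "\<dots> \<le> (\<Sum>m\<in>{1..N}. \<Sum>d | d dvd m. F d)"
    by (rule sum_mono2) (auto simp: B_def F0 intro: sum_nonneg)
  also have "\<dots> = (\<Sum>d\<in>{1..N}. F d * real (N div d))" by (rule divisor_swap)
  also have "\<dots> \<le> (\<Sum>d\<in>{1..N}. F d * (real N / real d))"
    by (intro sum_mono mult_left_mono div_upper F0)
  also have "\<dots> = real N * ((\<Sum>d\<in>{1..N}. Ps k d / real d) + 2 * (\<Sum>d\<in>{1..N}. Hf d / real d))"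
    by (simp add: F_def sum_distrib_left sum.distrib algebra_simps)
  also have "\<dots> \<le> real N * (2 * ln k + 2 * CH)"
    using Ps_sum[OF k, of N] Hf_sum[of N] by (intro mult_left_mono) auto
  finally show ?thesis .
qed

lemma bad_card:
  fixes N :: nat and k :: real
  assumes k: "k \<ge> 2" and N: "N \<ge> 2"
  defines "B \<equiv> {m\<in>{1..N}. \<not> (\<exists>p::nat. prime p \<and> real p > k \<and> multiplicity p m = 1)}"
  shows "real (card B) / real N \<le> (2/ln 2 + 4 + 4*CH/ln 2) * ln k / ln (real N)"
proof -
  define T where "T = {m\<in>B. real m \<le> sqrt (real N)}"
  define U where "U = {m\<in>B. \<not> real m \<le> sqrt (real N)}"
  have finB: "finite B" unfolding B_def by simp
  have BTU: "B = T \<union> U" "T \<inter> U = {}" unfolding T_def U_def by auto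
  have cardB: "card B = card T + card U"
    using finB BTU by (metis card_Un_disjoint finite_Un)
  have lnN: "ln (real N) > 0" using N by simp
  have sN: "sqrt (real N) > 0" using N by simp
  have "T \<subseteq> {1..nat \<lfloor>sqrt (real N)\<rfloor>}"
    unfolding T_def B_def by (auto simp: le_nat_iff le_floor_iff)
  hence "card T \<le> card {1..nat \<lfloor>sqrt (real N)\<rfloor>}" by (intro card_mono) auto
  hence "card T \<le> nat \<lfloor>sqrt (real N)\<rfloor>" by (simp only: card_atLeastAtMost diff_Suc_1)
  hence "real (card T) \<le> real (nat \<lfloor>sqrt (real N)\<rfloor>)" by (rule of_nat_mono)
  also have "real (nat \<lfloor>sqrt (real N)\<rfloor>) = real_of_int \<lfloor>sqrt (real N)\<rfloor>"
    using sN by (intro of_nat_nat) simp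
  also have "\<dots> \<le> sqrt (real N)" by (rule of_int_floor_le)
  finally have cT: "real (card T) \<le> sqrt (real N)" .
  have "real (card U) * (ln (real N) / 2) = (\<Sum>m\<in>U. ln (real N) / 2)" by simp
  also have "\<dots> \<le> (\<Sum>m\<in>U. ln (real m))"
  proof (rule sum_mono)
    fix m assume m: "m \<in> U"
    hence "sqrt (real N) < real m" unfolding U_def by auto
    hence "ln (sqrt (real N)) \<le> ln (real m)" using sN by (intro ln_mono) auto
    thus "ln (real N) / 2 \<le> ln (real m)" using N by (simp add: ln_sqrt)
  qed
  also have "\<dots> \<le> (\<Sum>m\<in>B. ln (real m))"
    by (rule sum_mono2[OF finB]) (auto simp: U_def B_def)
  also have "\<dots> \<le> real N * (2 * ln k + 2 * CH)" unfolding B_def by (rule bad_logsum[OF k])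
  finally have cU0: "real (card U) * (ln (real N) / 2) \<le> real N * (2 * ln k + 2 * CH)" .
  have cU: "real (card U) \<le> real N * (4 * ln k + 4 * CH) / ln (real N)"
    using cU0 lnN by (simp add: field_simps)
  have sq: "sqrt (real N) / real N \<le> 2 / ln (real N)"
  proof -
    have "ln (real N) \<le> 2 * sqrt (real N)" using N by (intro ln_le_2sqrt) simp
    hence "sqrt (real N) * ln (real N) \<le> sqrt (real N) * (2 * sqrt (real N))"
      using sN by (intro mult_left_mono) auto
    also have "\<dots> = 2 * real N" by simp
    finally show ?thesis using lnN N by (simp add: field_simps)
  qed
  have "real (card B) / real N = real (card T) / real N + real (card U) / real N"
    using cardB by (simp add: add_divide_distrib)
  also have "\<dots> \<le> sqrt (real N) / real N + (4 * ln k + 4 * CH) / ln (real N)"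
  proof (rule add_mono)
    show "real (card T) / real N \<le> sqrt (real N) / real N" using cT N by (intro divide_right_mono) auto
    show "real (card U) / real N \<le> (4 * ln k + 4 * CH) / ln (real N)"
      using cU N by (simp add: field_simps)
  qed
  also have "\<dots> \<le> (2 + 4 * ln k + 4 * CH) / ln (real N)"
    using sq by (simp add: add_divide_distrib)
  also have "\<dots> \<le> (2/ln 2 + 4 + 4*CH/ln 2) * ln k / ln (real N)"
  proof (rule divide_right_mono)
    have l2: "ln 2 > (0::real)" by simp
    have lk: "ln 2 \<le> ln k" using k by simp
    have "(2::real) = (2/ln 2) * ln 2" using l2 by simp
    also have "\<dots> \<le> (2/ln 2) * ln k" using lk l2 by (intro mult_left_mono) auto
    finally have a: "2 \<le> (2/ln 2) * ln k" .
    have "4 * CH = (4 * CH / ln 2) * ln 2" using l2 by simp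
    also have "\<dots> \<le> (4 * CH / ln 2) * ln k" using lk l2 CH_nonneg by (intro mult_left_mono) auto
    finally have b: "4 * CH \<le> (4 * CH / ln 2) * ln k" .
    show "2 + 4 * ln k + 4 * CH \<le> (2/ln 2 + 4 + 4*CH/ln 2) * ln k"
      using a b by (simp add: algebra_simps)
  qed (use lnN in simp)
  finally show ?thesis .
qed

theorem proposition4p2:
  shows "\<exists>C::real. \<forall>x k::real. x \<ge> 2 \<longrightarrow> k \<ge> 2 \<longrightarrow>
           \<bar>prob_large_simple_prime x k - 1\<bar> \<le> C * (ln k / ln x + 1 / k)"
proof (intro exI allI impI)
  define A where "A = 2/ln 2 + 4 + 4*CH/ln 2"
  have A0: "A \<ge> 0" unfolding A_def using CH_nonneg by simp
  fix x k :: real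
  assume x: "x \<ge> 2" and k: "k \<ge> 2"
  define N where "N = nat \<lfloor>x\<rfloor>"
  have N2: "N \<ge> 2" unfolding N_def using x by (simp add: le_nat_iff le_floor_iff)
  have Nx: "real N \<le> x" "x < real N + 1" unfolding N_def using x by linarith+
  define G where "G = {m \<in> {1..N}. \<exists>p::nat. prime p \<and> real p > k \<and> multiplicity p m = 1}"
  define B where "B = {m\<in>{1..N}. \<not> (\<exists>p::nat. prime p \<and> real p > k \<and> multiplicity p m = 1)}"
  have prob: "prob_large_simple_prime x k = real (card G) / real N"
    unfolding prob_large_simple_prime_def G_def N_def by simp
  have "{1..N} = G \<union> B" "G \<inter> B = {}" unfolding G_def B_def by auto
  hence "card G + card B = N" by (metis card_Un_disjoint card_atLeastAtMost diff_Suc_1 finite_Un finite_atLeastAtMost)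
  hence "real (card G) + real (card B) = real N" by (metis of_nat_add)
  hence "prob_large_simple_prime x k - 1 = - (real (card B) / real N)"
    using prob N2 by (simp add: field_simps)
  hence eq: "\<bar>prob_large_simple_prime x k - 1\<bar> = real (card B) / real N" by simp
  also have "\<dots> \<le> A * ln k / ln (real N)" unfolding B_def A_def by (rule bad_card[OF k N2])
  also have "\<dots> \<le> 2 * A * (ln k / ln x)"
  proof -
    have "real N + 1 \<le> real N * real N"
    proof -
      have "real N * 2 \<le> real N * real N" using N2 by (intro mult_left_mono) auto
      moreover have "real N \<ge> 2" using N2 by simp
      ultimately show ?thesis by linarith
    qed
    hence "x \<le> real N * real N" using Nx by linarith
    hence "ln x \<le> ln (real N * real N)" using x by (intro ln_mono) auto
    also have "\<dots> = 2 * ln (real N)" using N2 by (simp add: ln_mult)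
    finally have lx: "ln x \<le> 2 * ln (real N)" .
    have lx0: "ln x > 0" using x by simp
    have lk0: "ln k \<ge> 0" using k by simp
    have "A * ln k / ln (real N) = A * ln k * (1 / ln (real N))" by simp
    also have "\<dots> \<le> A * ln k * (2 / ln x)"
      using lx lx0 A0 lk0 by (intro mult_left_mono) (auto simp: field_simps)
    also have "\<dots> = 2 * A * (ln k / ln x)" by simp
    finally show ?thesis .
  qed
  also have "\<dots> \<le> 2 * A * (ln k / ln x + 1 / k)" using k A0 by (intro mult_left_mono) auto
  finally show "\<bar>prob_large_simple_prime x k - 1\<bar> \<le> (2 * A) * (ln k / ln x + 1 / k)" .
qed

end
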